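(* Let $F$, $G$ and $\Pi\colon\Sigma_A\times I\to\Sigma_N\times I$ be as in the context. If $S\subset\Sigma_A\times I$ is an attracting strip with respect to $G$, then $\Pi(S)$ is an attracting bi-strip with respect to $F$. If $S\subset\Sigma_A\times I$ is a repelling strip with respect to $G$, then $F^{-1}$ is well defined on $\Pi(S)$ and $\Pi(S)$ is a repelling bi-strip with respect to $F$.
   Context: $I=[0,1]$, $R(x)=1-x$. $F(\xi,p)=(\sigma(\xi),f_{\xi_0}(p))$ on $\Sigma_N\times I$, $\Sigma_N=\{1,\ldots,N\}^{\mathbb Z}$, with $f_i$ $C^1$-diffeomorphisms onto their images. $\mathcal I_P$ / $\mathcal I_R$: indices of orientation preserving / reversing $f_i$. $A=(a_{ij})_{i,j=1}^{2N}$ with $a_{ij}=1$ if ($i\in\mathcal I_P$, $j\le N$), or ($i\in\mathcal I_R$, $j>N$), or ($i-N\in\mathcal I_P$, $j>N$), or ($i-N\in\mathcal I_R$, $j\le N$), else $0$; $\Sigma_A$ the $A$-admissible sequences in $\{1,\ldots,2N\}^{\mathbb Z}$ with shift $\sigma_A$; $\pi(\omega)_n=\overline{\omega_n}$ ($\overline i=i$ for $i\le N$, $\overline i=i-N$ otherwise). $G(\omega,x)=(\sigma_A(\omega),g_{\omega_0}(x))$ with $g_i=f_i$, $g_{i+N}=R\circ f_i\circ R$ ($i\in\mathcal I_P$), $g_i=R\circ f_i$, $g_{i+N}=f_i\circ R$ ($i\in\mathcal I_R$). $C=\{\omega\colon\omega_0\le N\}$; $\Pi(\omega,x)=(\pi(\omega),x)$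 if $\omega\in C$, $(\pi(\omega),R(x))$ otherwise. For a space $\Sigma$ (either $\Sigma_A$ or $\Sigma_N$) and functions $\varphi,\psi\colon\Sigma\to I$ with $\varphi(\omega)<\psi(\omega)$ for all $\omega$, the strip is $S_{\varphi,\psi}=\{(\omega,x)\colon\varphi(\omega)\le x\le\psi(\omega)\}$; a bi-strip is a union of two strips. For a step skew-product $H$ on $\Sigma\times I$, a (bi-)strip $S$ is attracting if $H(S)\subset\operatorname{int}(S)$, and repelling if $H^{-1}$ is defined on $S$ and $H^{-1}(S)\subset\operatorname{int}(S)$. *)

theory Defs
  imports "HOL-Analysis.Analysis"
begin

text \<open>Sequences are maps int => nat (bi-infinite words); the topology on int => nat is the
product topology of the discrete topology on nat (library instance). The interval I = [0,1].\<close>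

abbreviation II :: "real set" where "II \<equiv> {0..1}"

definition Rf :: "real \<Rightarrow> real" where "Rf x = 1 - x"

definition shift :: "(int \<Rightarrow> nat) \<Rightarrow> (int \<Rightarrow> nat)" where
  "shift \<xi> = (\<lambda>n. \<xi> (n + 1))"

definition SigmaN :: "nat \<Rightarrow> (int \<Rightarrow> nat) set" where
  "SigmaN N = {\<xi>. \<forall>n. \<xi> n \<in> {1..N}}"

text \<open>C^1-diffeomorphism of I onto its image (contained in I): C^1 on I (one-sided derivatives
at the endpoints), injective, with nowhere vanishing derivative (so the inverse is C^1).\<close>
definition C1_diffeo_onto_image :: "(real \<Rightarrow> real) \<Rightarrow> bool" where
  "C1_diffeo_onto_image f \<longleftrightarrow> f ` II \<subseteq> II \<and> inj_on f II \<and>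
     (\<exists>f'. (\<forall>x\<in>II. (f has_real_derivative f' x) (at x within II)) \<and>
           continuous_on II f' \<and> (\<forall>x\<in>II. f' x \<noteq> 0))"

definition IP :: "nat \<Rightarrow> (nat \<Rightarrow> real \<Rightarrow> real) \<Rightarrow> nat set" where
  "IP N f = {i \<in> {1..N}. strict_mono_on II (f i)}"

definition IR :: "nat \<Rightarrow> (nat \<Rightarrow> real \<Rightarrow> real) \<Rightarrow> nat set" where
  "IR N f = {i \<in> {1..N}. strict_antimono_on II (f i)}"

definition FF :: "(nat \<Rightarrow> real \<Rightarrow> real) \<Rightarrow> (int \<Rightarrow> nat) \<times> real \<Rightarrow> (int \<Rightarrow> nat) \<times> real" where
  "FF f z = (shift (fst z), f (fst z 0) (snd z))"

definition amat :: "nat \<Rightarrow> (nat \<Rightarrow> real \<Rightarrow> real) \<Rightarrow> nat \<Rightarrow> nat \<Rightarrow> bool" where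
  "amat N f i j \<longleftrightarrow>
     (i \<in> IP N f \<and> j \<le> N) \<or> (i \<in> IR N f \<and> j > N) \<or>
     (i - N \<in> IP N f \<and> i > N \<and> j > N) \<or> (i - N \<in> IR N f \<and> i > N \<and> j \<le> N)"

definition SigmaA :: "nat \<Rightarrow> (nat \<Rightarrow> real \<Rightarrow> real) \<Rightarrow> (int \<Rightarrow> nat) set" where
  "SigmaA N f = {\<omega>. (\<forall>n. \<omega> n \<in> {1..2*N}) \<and> (\<forall>n. amat N f (\<omega> n) (\<omega> (n + 1)))}"

definition bar :: "nat \<Rightarrow> nat \<Rightarrow> nat" where
  "bar N i = (if i \<le> N then i else i - N)"

definition piA :: "nat \<Rightarrow> (int \<Rightarrow> nat) \<Rightarrow> (int \<Rightarrow> nat)" where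
  "piA N \<omega> = (\<lambda>n. bar N (\<omega> n))"

definition gmap :: "nat \<Rightarrow> (nat \<Rightarrow> real \<Rightarrow> real) \<Rightarrow> nat \<Rightarrow> real \<Rightarrow> real" where
  "gmap N f j =
     (if j \<le> N then (if j \<in> IP N f then f j else Rf \<circ> f j)
      else (if j - N \<in> IP N f then Rf \<circ> f (j - N) \<circ> Rf else f (j - N) \<circ> Rf))"

definition GG :: "nat \<Rightarrow> (nat \<Rightarrow> real \<Rightarrow> real) \<Rightarrow> (int \<Rightarrow> nat) \<times> real \<Rightarrow> (int \<Rightarrow> nat) \<times> real" where
  "GG N f z = (shift (fst z), gmap N f (fst z 0) (snd z))"

definition PiMap :: "nat \<Rightarrow> (int \<Rightarrow> nat) \<times> real \<Rightarrow> (int \<Rightarrow> nat) \<times> real" where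
  "PiMap N z = (if fst z 0 \<le> N then (piA N (fst z), snd z) else (piA N (fst z), Rf (snd z)))"

definition strip :: "(int \<Rightarrow> nat) set \<Rightarrow> ((int \<Rightarrow> nat) \<Rightarrow> real) \<Rightarrow> ((int \<Rightarrow> nat) \<Rightarrow> real)
    \<Rightarrow> ((int \<Rightarrow> nat) \<times> real) set" where
  "strip Sig \<phi> \<psi> = {(\<omega>, x). \<omega> \<in> Sig \<and> \<phi> \<omega> \<le> x \<and> x \<le> \<psi> \<omega>}"

definition is_strip :: "(int \<Rightarrow> nat) set \<Rightarrow> ((int \<Rightarrow> nat) \<times> real) set \<Rightarrow> bool" where
  "is_strip Sig S \<longleftrightarrow> (\<exists>\<phi> \<psi>. (\<forall>\<omega>\<in>Sig. \<phi> \<omega> \<in> II \<and> \<psi> \<omega> \<in> II \<and> \<phi> \<omega> < \<psi> \<omega>)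
      \<and> S = strip Sig \<phi> \<psi>)"

definition is_bistrip :: "(int \<Rightarrow> nat) set \<Rightarrow> ((int \<Rightarrow> nat) \<times> real) set \<Rightarrow> bool" where
  "is_bistrip Sig S \<longleftrightarrow> (\<exists>S1 S2. is_strip Sig S1 \<and> is_strip Sig S2 \<and> S = S1 \<union> S2)"

definition phase_top :: "(int \<Rightarrow> nat) set \<Rightarrow> ((int \<Rightarrow> nat) \<times> real) topology" where
  "phase_top Sig = prod_topology (top_of_set Sig) (top_of_set II)"

definition attracting ::
  "(int \<Rightarrow> nat) set \<Rightarrow> ((int \<Rightarrow> nat) \<times> real \<Rightarrow> (int \<Rightarrow> nat) \<times> real)
     \<Rightarrow> ((int \<Rightarrow> nat) \<times> real) set \<Rightarrow> bool" where
  "attracting Sig H S \<longleftrightarrow> H ` S \<subseteq> phase_top Sig interior_of S"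

text \<open>H^{-1} is defined on S (S lies in the image of Sig x I) and H^{-1}(S) lies in int(S).\<close>
definition repelling ::
  "(int \<Rightarrow> nat) set \<Rightarrow> ((int \<Rightarrow> nat) \<times> real \<Rightarrow> (int \<Rightarrow> nat) \<times> real)
     \<Rightarrow> ((int \<Rightarrow> nat) \<times> real) set \<Rightarrow> bool" where
  "repelling Sig H S \<longleftrightarrow> S \<subseteq> H ` (Sig \<times> II) \<and>
     inv_into (Sig \<times> II) H ` S \<subseteq> phase_top Sig interior_of S"

end

theory Submission
  imports Defs
begin


definition cyl :: "(int \<Rightarrow> nat) \<Rightarrow> int \<Rightarrow> (int \<Rightarrow> nat) set" where
  "cyl \<omega> K = {\<eta>. \<forall>n. \<bar>n\<bar> \<le> K \<longrightarrow> \<eta> n = \<omega> n}"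

lemma open_cyl: "open (cyl \<omega> K)"
proof -
  have eq: "cyl \<omega> K = PiE UNIV (\<lambda>i. if \<bar>i\<bar> \<le> K then {\<omega> i} else UNIV)"
    unfolding cyl_def PiE_UNIV_domain by (auto simp: Pi_def split: if_splits)
  have "finite {i. (if \<bar>i\<bar> \<le> K then {\<omega> i} else UNIV) \<noteq> UNIV}"
    by (rule finite_subset[of _ "{-K..K}"]) (auto split: if_splits)
  then show ?thesis unfolding eq by (intro open_PiE) (auto simp: open_discrete)
qed

lemma open_contains_cyl:
  fixes T :: "(int \<Rightarrow> nat) set"
  assumes "open T" "\<omega> \<in> T" shows "\<exists>K. cyl \<omega> K \<subseteq> T"
proof -
  obtain U where fin: "finite {i. U i \<noteq> UNIV}" and om: "\<omega> \<in> PiE UNIV U" and sub: "PiE UNIV U \<subseteq> T"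
    using assms unfolding open_fun_def openin_product_topology_alt by fastforce
  define F where "F = {i. U i \<noteq> UNIV}"
  define K where "K = Max (insert 0 (abs ` F))"
  have "cyl \<omega> K \<subseteq> PiE UNIV U"
  proof
    fix \<eta> assume h: "\<eta> \<in> cyl \<omega> K"
    have "\<eta> i \<in> U i" for i
    proof (cases "i \<in> F")
      case True
      then have "\<bar>i\<bar> \<le> K" unfolding K_def using fin F_def by (intro Max_ge) auto
      then show ?thesis using h om unfolding cyl_def by (auto simp: PiE_UNIV_domain)
    next
      case False then show ?thesis by (auto simp: F_def)
    qed
    then show "\<eta> \<in> PiE UNIV U" by (auto simp: PiE_UNIV_domain)
  qed
  then show ?thesis using sub by blast
qed

definition cbx where
  "cbx Sig \<omega> K x e = {(\<eta>,y). \<eta> \<in> Sig \<and> \<eta> \<in> cyl \<omega> K \<and> y \<in> II \<and> \<bar>y - x\<bar> < e}"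

lemma interior_char:
  "(\<omega>,x) \<in> phase_top Sig interior_of S \<longleftrightarrow>
     \<omega> \<in> Sig \<and> x \<in> II \<and> (\<exists>K e. e > 0 \<and> cbx Sig \<omega> K x e \<subseteq> S)"
proof
  assume "(\<omega>,x) \<in> phase_top Sig interior_of S"
  then obtain T where T: "openin (phase_top Sig) T" "(\<omega>,x) \<in> T" "T \<subseteq> S"
    unfolding interior_of_def by auto
  obtain U V where UV: "openin (top_of_set Sig) U" "openin (top_of_set II) V" "\<omega> \<in> U" "x \<in> V" "U \<times> V \<subseteq> T"
    using T(1)[unfolded phase_top_def openin_prod_topology_alt] T(2) by meson
  obtain U' where U': "open U'" "U = Sig \<inter> U'" using UV(1) openin_open by blast
  obtain V' where V': "open V'" "V = II \<inter> V'" using UV(2) openin_open by blast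
  have "\<omega> \<in> U'" using U' UV(3) by simp
  then obtain K where K: "cyl \<omega> K \<subseteq> U'" using open_contains_cyl U'(1) by blast
  have "x \<in> V'" using V' UV(4) by simp
  then obtain e where e: "e > 0" "\<And>y. dist y x < e \<Longrightarrow> y \<in> V'" using V'(1) open_dist by metis
  have "cbx Sig \<omega> K x e \<subseteq> U \<times> V"
  proof
    fix p assume "p \<in> cbx Sig \<omega> K x e"
    then obtain \<eta> y where p: "p = (\<eta>,y)" "\<eta> \<in> Sig" "\<eta> \<in> cyl \<omega> K" "y \<in> II" "\<bar>y - x\<bar> < e"
      unfolding cbx_def by blast
    have "y \<in> V'" using e(2) p(5) by (simp add: dist_real_def)
    then show "p \<in> U \<times> V" using p K U'(2) V'(2) by auto
  qed
  then have "cbx Sig \<omega> K x e \<subseteq> S" using UV(5) T(3) by (meson order_trans)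
  moreover have "\<omega> \<in> Sig" "x \<in> II" using UV(3,4) U'(2) V'(2) by auto
  ultimately show "\<omega> \<in> Sig \<and> x \<in> II \<and> (\<exists>K e. e > 0 \<and> cbx Sig \<omega> K x e \<subseteq> S)"
    using e(1) by blast
next
  assume "\<omega> \<in> Sig \<and> x \<in> II \<and> (\<exists>K e. e > 0 \<and> cbx Sig \<omega> K x e \<subseteq> S)"
  then obtain K e where h: "\<omega> \<in> Sig" "x \<in> II" "e > 0" "cbx Sig \<omega> K x e \<subseteq> S" by blast
  have eq: "cbx Sig \<omega> K x e = (Sig \<inter> cyl \<omega> K) \<times> (II \<inter> ball x e)"
    by (auto simp: cbx_def dist_real_def)
  have "openin (phase_top Sig) (cbx Sig \<omega> K x e)"
  proof -
    have "openin (top_of_set Sig) (Sig \<inter> cyl \<omega> K)" using open_cyl openin_open by blast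
    moreover have "openin (top_of_set II) (II \<inter> ball x e)" using open_ball openin_open by blast
    ultimately show ?thesis unfolding eq phase_top_def using openin_Times by (simp add: openin_prod_Times_iff)
  qed
  moreover have "(\<omega>,x) \<in> cbx Sig \<omega> K x e" using h by (auto simp: cbx_def cyl_def)
  ultimately show "(\<omega>,x) \<in> phase_top Sig interior_of S"
    using h(4) unfolding interior_of_def by blast
qed



lemma IP_not_IR: "i \<in> IP N f \<Longrightarrow> i \<notin> IR N f"
proof
  assume a: "i \<in> IP N f" "i \<in> IR N f"
  have "f i 0 < f i 1" using a(1) unfolding IP_def by (simp add: monotone_on_def)
  moreover have "f i 0 > f i 1" using a(2) unfolding IR_def by (simp add: monotone_on_def)
  ultimately show False by simp
qed

lemma IP_range: "i \<in> IP N f \<Longrightarrow> 1 \<le> i \<and> i \<le> N" by (simp add: IP_def)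
lemma IR_range: "i \<in> IR N f \<Longrightarrow> 1 \<le> i \<and> i \<le> N" by (simp add: IR_def)

lemma cover:
  assumes "C1_diffeo_onto_image g"
  shows "strict_mono_on II g \<or> strict_antimono_on II g"
proof -
  obtain g' where d: "\<forall>x\<in>II. (g has_real_derivative g' x) (at x within II)" and inj: "inj_on g II"
    using assms unfolding C1_diffeo_onto_image_def by blast
  have "continuous_on II g"
    unfolding continuous_on_eq_continuous_within using d DERIV_continuous by blast
  then show ?thesis using injective_eq_monotone_map[of II g] inj by (simp add: is_interval_cc)
qed

lemma cover_I:
  assumes "\<forall>i\<in>{1..N}. C1_diffeo_onto_image (f i)" "1 \<le> i" "i \<le> N"
  shows "i \<in> IP N f \<or> i \<in> IR N f"
  using cover[of "f i"] assms by (auto simp: IP_def IR_def)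

lemma amat_next:
  assumes "\<omega> \<in> SigmaA N f"
  shows "(N < \<omega> (n+1)) = ((N < \<omega> n) \<noteq> (bar N (\<omega> n) \<in> IR N f))"
    and "bar N (\<omega> n) \<in> IP N f \<or> bar N (\<omega> n) \<in> IR N f"
proof -
  have r: "\<omega> n \<in> {1..2*N}" "\<omega> (n+1) \<in> {1..2*N}" and a: "amat N f (\<omega> n) (\<omega> (n+1))"
    using assms unfolding SigmaA_def by auto
  have z: "(0::nat) \<notin> IP N f" "(0::nat) \<notin> IR N f" using IP_range IR_range by fastforce+
  have "((N < \<omega> (n+1)) = ((N < \<omega> n) \<noteq> (bar N (\<omega> n) \<in> IR N f))) \<and>
        (bar N (\<omega> n) \<in> IP N f \<or> bar N (\<omega> n) \<in> IR N f)"
  proof (cases "\<omega> n \<le> N")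
    case True
    then have "\<omega> n - N = 0" by simp
    then show ?thesis using a True z IP_not_IR[of "\<omega> n" N f] unfolding amat_def bar_def by auto
  next
    case False
    then have "\<omega> n \<notin> IP N f" "\<omega> n \<notin> IR N f" using IP_range IR_range by fastforce+
    then show ?thesis using a False IP_not_IR[of "\<omega> n - N" N f] unfolding amat_def bar_def by auto
  qed
  then show "(N < \<omega> (n+1)) = ((N < \<omega> n) \<noteq> (bar N (\<omega> n) \<in> IR N f))"
    "bar N (\<omega> n) \<in> IP N f \<or> bar N (\<omega> n) \<in> IR N f" by auto
qed

lemma piA_in: "\<omega> \<in> SigmaA N f \<Longrightarrow> piA N \<omega> \<in> SigmaN N"
proof -
  assume "\<omega> \<in> SigmaA N f"
  then have "\<omega> n \<in> {1..2*N}" for n by (auto simp: SigmaA_def)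
  then have "bar N (\<omega> n) \<in> {1..N}" for n
  proof -
    have "1 \<le> \<omega> n" "\<omega> n \<le> 2*N" using \<open>\<And>n. \<omega> n \<in> {1..2*N}\<close>[of n] by auto
    then show ?thesis unfolding bar_def by auto
  qed
  then show ?thesis unfolding SigmaN_def piA_def by auto
qed

fun fwd :: "nat \<Rightarrow> (nat \<Rightarrow> real \<Rightarrow> real) \<Rightarrow> (int \<Rightarrow> nat) \<Rightarrow> bool \<Rightarrow> nat \<Rightarrow> bool" where
  "fwd N f \<xi> b 0 = b"
| "fwd N f \<xi> b (Suc m) = (fwd N f \<xi> b m \<noteq> (\<xi> (int m) \<in> IR N f))"

fun bwd :: "nat \<Rightarrow> (nat \<Rightarrow> real \<Rightarrow> real) \<Rightarrow> (int \<Rightarrow> nat) \<Rightarrow> bool \<Rightarrow> nat \<Rightarrow> bool" where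
  "bwd N f \<xi> b 0 = b"
| "bwd N f \<xi> b (Suc m) = (bwd N f \<xi> b m \<noteq> (\<xi> (- int m - 1) \<in> IR N f))"

definition side where
  "side N f \<xi> b n = (if n \<ge> 0 then fwd N f \<xi> b (nat n) else bwd N f \<xi> b (nat (-n)))"

definition lift where
  "lift N f \<xi> b = (\<lambda>n. \<xi> n + (if side N f \<xi> b n then N else 0))"

lemma side_0: "side N f \<xi> b 0 = b" by (simp add: side_def)

lemma side_step: "side N f \<xi> b (n+1) = (side N f \<xi> b n \<noteq> (\<xi> n \<in> IR N f))"
proof (cases "n \<ge> 0")
  case True
  then have "nat (n+1) = Suc (nat n)" by simp
  then show ?thesis using True by (simp add: side_def)
next
  case False
  then have e: "nat (-n) = Suc (nat (-n-1))" by simp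
  have e2: "- int (nat (-n-1)) - 1 = n" using False by simp
  have "side N f \<xi> b (n+1) = bwd N f \<xi> b (nat (-n-1))"
    using False by (cases "n = -1") (auto simp: side_def)
  moreover have "side N f \<xi> b n = (bwd N f \<xi> b (nat (-n-1)) \<noteq> (\<xi> n \<in> IR N f))"
    using False by (simp add: side_def e e2)
  ultimately show ?thesis by blast
qed

lemma side_local:
  assumes "\<forall>k. \<bar>k\<bar> \<le> K \<longrightarrow> \<xi> k = \<xi>' k" "\<bar>n\<bar> \<le> K"
  shows "side N f \<xi> b n = side N f \<xi>' b n"
proof -
  have f: "int m \<le> K \<longrightarrow> fwd N f \<xi> b m = fwd N f \<xi>' b m" for m
    by (induction m) (use assms(1) in auto)
  have g: "int m \<le> K \<longrightarrow> bwd N f \<xi> b m = bwd N f \<xi>' b m" for m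
  proof (induction m)
    case (Suc m)
    then show ?case using assms(1)[rule_format, of "- int m - 1"] by auto
  qed simp
  show ?thesis using f g assms(2) unfolding side_def by auto
qed

lemma lift_in:
  assumes d: "\<forall>i\<in>{1..N}. C1_diffeo_onto_image (f i)" and x: "\<xi> \<in> SigmaN N"
  shows "lift N f \<xi> b \<in> SigmaA N f"
proof -
  have r: "\<xi> n \<in> {1..N}" for n using x by (auto simp: SigmaN_def)
  have c: "\<xi> n \<in> IP N f \<or> \<xi> n \<in> IR N f" for n using cover_I[OF d] r[of n] by auto
  have "amat N f (lift N f \<xi> b n) (lift N f \<xi> b (n+1))" for n
  proof -
    have s: "side N f \<xi> b (n+1) = (side N f \<xi> b n \<noteq> (\<xi> n \<in> IR N f))" by (rule side_step)
    have rn: "1 \<le> \<xi> n" "\<xi> n \<le> N" "1 \<le> \<xi> (n+1)" "\<xi> (n+1) \<le> N" using r[of n] r[of "n+1"] by auto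
    have d: "\<xi> n \<in> IP N f \<Longrightarrow> \<xi> n \<notin> IR N f" by (rule IP_not_IR)
    consider "\<not> side N f \<xi> b n" "\<xi> n \<in> IP N f" | "\<not> side N f \<xi> b n" "\<xi> n \<in> IR N f"
      | "side N f \<xi> b n" "\<xi> n \<in> IP N f" | "side N f \<xi> b n" "\<xi> n \<in> IR N f"
      using c[of n] by blast
    then show ?thesis
    proof cases
      case 1
      then have "lift N f \<xi> b n = \<xi> n" "lift N f \<xi> b (n+1) = \<xi> (n+1)"
        using s d by (auto simp: lift_def)
      then show ?thesis using 1 rn unfolding amat_def by simp
    next
      case 2
      then have "lift N f \<xi> b n = \<xi> n" "lift N f \<xi> b (n+1) = \<xi> (n+1) + N"
        using s by (auto simp: lift_def)
      then show ?thesis using 2 rn unfolding amat_def by simp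
    next
      case 3
      then have "lift N f \<xi> b n = \<xi> n + N" "lift N f \<xi> b (n+1) = \<xi> (n+1) + N"
        using s d by (auto simp: lift_def)
      then show ?thesis using 3 rn unfolding amat_def by simp
    next
      case 4
      then have "lift N f \<xi> b n = \<xi> n + N" "lift N f \<xi> b (n+1) = \<xi> (n+1)"
        using s by (auto simp: lift_def)
      then show ?thesis using 4 rn unfolding amat_def by simp
    qed
  qed
  moreover have "lift N f \<xi> b n \<in> {1..2*N}" for n using r[of n] by (auto simp: lift_def)
  ultimately show ?thesis by (auto simp: SigmaA_def)
qed

lemma piA_lift: "\<xi> \<in> SigmaN N \<Longrightarrow> piA N (lift N f \<xi> b) = \<xi>"
proof
  fix n assume "\<xi> \<in> SigmaN N"
  then have "\<xi> n \<in> {1..N}" by (auto simp: SigmaN_def)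
  then show "piA N (lift N f \<xi> b) n = \<xi> n" by (auto simp: piA_def lift_def bar_def)
qed

lemma lift_0: "\<xi> \<in> SigmaN N \<Longrightarrow> (N < lift N f \<xi> b 0) = b"
proof -
  assume "\<xi> \<in> SigmaN N"
  then have "\<xi> 0 \<in> {1..N}" by (auto simp: SigmaN_def)
  then show ?thesis by (auto simp: lift_def side_0)
qed

lemma lift_unique:
  assumes "\<omega> \<in> SigmaA N f"
  shows "lift N f (piA N \<omega>) (N < \<omega> 0) = \<omega>"
proof -
  let ?s = "side N f (piA N \<omega>) (N < \<omega> 0)"
  have st: "(N < \<omega> (n+1)) = ((N < \<omega> n) \<noteq> (piA N \<omega> n \<in> IR N f))" for n
    using amat_next(1)[OF assms] by (simp add: piA_def)
  have ss: "?s (n+1) = (?s n \<noteq> (piA N \<omega> n \<in> IR N f))" for n by (rule side_step)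
  have "(N < \<omega> n) = ?s n" for n
  proof (induction n rule: int_induct[where k=0])
    case base then show ?case by (simp add: side_0)
  next
    case (step1 i) then show ?case using st[of i] ss[of i] by simp
  next
    case (step2 i) then show ?case using st[of "i-1"] ss[of "i-1"] by auto
  qed
  moreover have "\<omega> n \<in> {1..2*N}" for n using assms by (auto simp: SigmaA_def)
  ultimately show ?thesis
  proof -
    assume A: "\<And>n. (N < \<omega> n) = ?s n" and B: "\<And>n. \<omega> n \<in> {1..2*N}"
    show ?thesis
    proof
      fix n
      show "lift N f (piA N \<omega>) (N < \<omega> 0) n = \<omega> n"
      proof (cases "N < \<omega> n")
        case True
        then have "?s n" using A by blast
        then show ?thesis using True by (simp add: lift_def piA_def bar_def)
      next
        case False
        then have "\<not> ?s n" using A by blast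
        then show ?thesis using False by (simp add: lift_def piA_def bar_def)
      qed
    qed
  qed
qed

lemma semiconj:
  assumes "\<omega> \<in> SigmaA N f"
  shows "PiMap N (GG N f (\<omega>,x)) = FF f (PiMap N (\<omega>,x))"
proof -
  have a: "(N < \<omega> 1) = ((N < \<omega> 0) \<noteq> (bar N (\<omega> 0) \<in> IR N f))"
    "bar N (\<omega> 0) \<in> IP N f \<or> bar N (\<omega> 0) \<in> IR N f"
    using amat_next[OF assms, of 0] by auto
  have d: "bar N (\<omega> 0) \<in> IP N f \<Longrightarrow> bar N (\<omega> 0) \<notin> IR N f" by (rule IP_not_IR)
  have sh: "piA N (shift \<omega>) = shift (piA N \<omega>)" by (simp add: piA_def shift_def)
  have s1: "shift \<omega> 0 = \<omega> 1" by (simp add: shift_def)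
  have pa: "\<And>\<omega> n. piA N \<omega> n = bar N (\<omega> n)" by (simp add: piA_def)
  have L: "PiMap N (GG N f (\<omega>,x)) = (shift (piA N \<omega>),
     (if \<omega> 1 \<le> N then gmap N f (\<omega> 0) x else Rf (gmap N f (\<omega> 0) x)))"
    by (simp add: GG_def PiMap_def sh s1)
  have R: "FF f (PiMap N (\<omega>,x)) = (shift (piA N \<omega>), f (bar N (\<omega> 0)) (if \<omega> 0 \<le> N then x else Rf x))"
    by (simp add: FF_def PiMap_def pa)
  have RR: "\<And>y. Rf (Rf y) = y" by (simp add: Rf_def)
  have "(if \<omega> 1 \<le> N then gmap N f (\<omega> 0) x else Rf (gmap N f (\<omega> 0) x))
        = f (bar N (\<omega> 0)) (if \<omega> 0 \<le> N then x else Rf x)"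
  proof (cases "\<omega> 0 \<le> N")
    case True
    then have b: "bar N (\<omega> 0) = \<omega> 0" by (simp add: bar_def)
    show ?thesis
    proof (cases "\<omega> 0 \<in> IP N f")
      case True
      then show ?thesis using a d b \<open>\<omega> 0 \<le> N\<close> by (simp add: gmap_def)
    next
      case False
      then show ?thesis using a d b \<open>\<omega> 0 \<le> N\<close> by (simp add: gmap_def RR)
    qed
  next
    case False
    then have b: "bar N (\<omega> 0) = \<omega> 0 - N" by (simp add: bar_def)
    show ?thesis
    proof (cases "\<omega> 0 - N \<in> IP N f")
      case True
      then show ?thesis using a d b \<open>\<not> \<omega> 0 \<le> N\<close> by (simp add: gmap_def RR)
    next
      case False
      then show ?thesis using a d b \<open>\<not> \<omega> 0 \<le> N\<close> by (simp add: gmap_def RR)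
    qed
  qed
  then show ?thesis using L R by simp
qed


lemma bistrip:
  assumes d: "\<forall>i\<in>{1..N}. C1_diffeo_onto_image (f i)" and S: "is_strip (SigmaA N f) S"
  shows "is_bistrip (SigmaN N) (PiMap N ` S)"
proof -
  obtain \<phi> \<psi> where ph: "\<forall>\<omega>\<in>SigmaA N f. \<phi> \<omega> \<in> II \<and> \<psi> \<omega> \<in> II \<and> \<phi> \<omega> < \<psi> \<omega>"
    and Sd: "S = strip (SigmaA N f) \<phi> \<psi>" using S unfolding is_strip_def by blast
  define L where "L = (\<lambda>\<xi>. lift N f \<xi> False)"
  define U where "U = (\<lambda>\<xi>. lift N f \<xi> True)"
  have LA: "\<xi> \<in> SigmaN N \<Longrightarrow> L \<xi> \<in> SigmaA N f" for \<xi> using lift_in[OF d] by (simp add: L_def)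
  have UA: "\<xi> \<in> SigmaN N \<Longrightarrow> U \<xi> \<in> SigmaA N f" for \<xi> using lift_in[OF d] by (simp add: U_def)
  define S1 where "S1 = strip (SigmaN N) (\<lambda>\<xi>. \<phi> (L \<xi>)) (\<lambda>\<xi>. \<psi> (L \<xi>))"
  define S2 where "S2 = strip (SigmaN N) (\<lambda>\<xi>. 1 - \<psi> (U \<xi>)) (\<lambda>\<xi>. 1 - \<phi> (U \<xi>))"
  have "is_strip (SigmaN N) S1" unfolding is_strip_def S1_def
  proof (intro exI conjI ballI)
    fix \<xi> assume "\<xi> \<in> SigmaN N"
    then have "\<phi> (L \<xi>) \<in> II \<and> \<psi> (L \<xi>) \<in> II \<and> \<phi> (L \<xi>) < \<psi> (L \<xi>)" using ph LA by blast
    then show "\<phi> (L \<xi>) \<in> II" "\<psi> (L \<xi>) \<in> II" "\<phi> (L \<xi>) < \<psi> (L \<xi>)" by auto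
  qed simp
  moreover have "is_strip (SigmaN N) S2" unfolding is_strip_def S2_def
  proof (intro exI conjI ballI)
    fix \<xi> assume "\<xi> \<in> SigmaN N"
    then have "\<phi> (U \<xi>) \<in> II \<and> \<psi> (U \<xi>) \<in> II \<and> \<phi> (U \<xi>) < \<psi> (U \<xi>)" using ph UA by blast
    then show "1 - \<psi> (U \<xi>) \<in> II" "1 - \<phi> (U \<xi>) \<in> II" "1 - \<psi> (U \<xi>) < 1 - \<phi> (U \<xi>)" by auto
  qed simp
  moreover have "PiMap N ` S = S1 \<union> S2"
  proof
    show "PiMap N ` S \<subseteq> S1 \<union> S2"
    proof
      fix p assume "p \<in> PiMap N ` S"
      then obtain \<omega> x where w: "\<omega> \<in> SigmaA N f" "\<phi> \<omega> \<le> x" "x \<le> \<psi> \<omega>" "p = PiMap N (\<omega>,x)"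
        unfolding Sd strip_def by blast
      have pn: "piA N \<omega> \<in> SigmaN N" using piA_in w(1) by blast
      show "p \<in> S1 \<union> S2"
      proof (cases "\<omega> 0 \<le> N")
        case True
        then have "L (piA N \<omega>) = \<omega>" using lift_unique[OF w(1)] by (simp add: L_def)
        then have "p \<in> S1" using w pn True by (simp add: S1_def strip_def PiMap_def)
        then show ?thesis by blast
      next
        case False
        then have "U (piA N \<omega>) = \<omega>" using lift_unique[OF w(1)] by (simp add: U_def)
        then have "p \<in> S2" using w pn False by (simp add: S2_def strip_def PiMap_def Rf_def)
        then show ?thesis by blast
      qed
    qed
    show "S1 \<union> S2 \<subseteq> PiMap N ` S"
    proof
      fix p assume "p \<in> S1 \<union> S2"
      then obtain \<xi> x where p: "p = (\<xi>,x)" "\<xi> \<in> SigmaN N" and c: "(\<phi> (L \<xi>) \<le> x \<and> x \<le> \<psi> (L \<xi>)) \<or>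
          (1 - \<psi> (U \<xi>) \<le> x \<and> x \<le> 1 - \<phi> (U \<xi>))"
        unfolding S1_def S2_def strip_def by blast
      show "p \<in> PiMap N ` S"
      proof (cases "\<phi> (L \<xi>) \<le> x \<and> x \<le> \<psi> (L \<xi>)")
        case True
        then have "(L \<xi>, x) \<in> S" using LA[OF p(2)] by (simp add: Sd strip_def)
        moreover have "PiMap N (L \<xi>, x) = p"
          using lift_0[OF p(2), of f False] piA_lift[OF p(2)] p(1) by (simp add: PiMap_def L_def)
        ultimately show ?thesis by (metis image_eqI)
      next
        case False
        then have h: "1 - \<psi> (U \<xi>) \<le> x \<and> x \<le> 1 - \<phi> (U \<xi>)" using c by blast
        then have "(U \<xi>, 1 - x) \<in> S" using UA[OF p(2)] by (simp add: Sd strip_def)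
        moreover have "PiMap N (U \<xi>, 1 - x) = p"
          using lift_0[OF p(2), of f True] piA_lift[OF p(2)] p(1) by (simp add: PiMap_def U_def Rf_def)
        ultimately show ?thesis by (metis image_eqI)
      qed
    qed
  qed
  ultimately show ?thesis unfolding is_bistrip_def by blast
qed

lemma interior_PiMap:
  assumes d: "\<forall>i\<in>{1..N}. C1_diffeo_onto_image (f i)"
    and q: "(\<eta>,y) \<in> phase_top (SigmaA N f) interior_of S"
  shows "PiMap N (\<eta>,y) \<in> phase_top (SigmaN N) interior_of (PiMap N ` S)"
proof -
  obtain K e where h: "\<eta> \<in> SigmaA N f" "y \<in> II" "e > 0" "cbx (SigmaA N f) \<eta> K y e \<subseteq> S"
    using q interior_char by blast
  have pn: "piA N \<eta> \<in> SigmaN N" using piA_in h(1) by blast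
  have loc: "\<xi> \<in> cyl (piA N \<eta>) K \<Longrightarrow> lift N f \<xi> b \<in> cyl (lift N f (piA N \<eta>) b) K" for \<xi> b
    using side_local[of K \<xi> "piA N \<eta>" _ N f b] unfolding cyl_def lift_def by auto
  show ?thesis
  proof (cases "\<eta> 0 \<le> N")
    case True
    have eq: "lift N f (piA N \<eta>) False = \<eta>" using lift_unique[OF h(1)] True by simp
    have "cbx (SigmaN N) (piA N \<eta>) K y e \<subseteq> PiMap N ` S"
    proof
      fix p assume "p \<in> cbx (SigmaN N) (piA N \<eta>) K y e"
      then obtain \<xi> z where p: "p = (\<xi>,z)" "\<xi> \<in> SigmaN N" "\<xi> \<in> cyl (piA N \<eta>) K" "z \<in> II" "\<bar>z - y\<bar> < e"
        unfolding cbx_def by blast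
      have "(lift N f \<xi> False, z) \<in> cbx (SigmaA N f) \<eta> K y e"
        using lift_in[OF d p(2)] loc[OF p(3), of False] eq p by (simp add: cbx_def)
      then have "(lift N f \<xi> False, z) \<in> S" using h(4) by blast
      moreover have "PiMap N (lift N f \<xi> False, z) = p"
        using lift_0[OF p(2), of f False] piA_lift[OF p(2)] p(1) by (simp add: PiMap_def)
      ultimately show "p \<in> PiMap N ` S" by (metis image_eqI)
    qed
    then show ?thesis using interior_char pn h True by (simp add: PiMap_def) blast
  next
    case False
    have eq: "lift N f (piA N \<eta>) True = \<eta>" using lift_unique[OF h(1)] False by simp
    have "cbx (SigmaN N) (piA N \<eta>) K (1 - y) e \<subseteq> PiMap N ` S"
    proof
      fix p assume "p \<in> cbx (SigmaN N) (piA N \<eta>) K (1 - y) e"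
      then obtain \<xi> z where p: "p = (\<xi>,z)" "\<xi> \<in> SigmaN N" "\<xi> \<in> cyl (piA N \<eta>) K" "z \<in> II" "\<bar>z - (1 - y)\<bar> < e"
        unfolding cbx_def by blast
      have "(lift N f \<xi> True, 1 - z) \<in> cbx (SigmaA N f) \<eta> K y e"
        using lift_in[OF d p(2)] loc[OF p(3), of True] eq p by (simp add: cbx_def abs_minus_commute)
      then have "(lift N f \<xi> True, 1 - z) \<in> S" using h(4) by blast
      moreover have "PiMap N (lift N f \<xi> True, 1 - z) = p"
        using lift_0[OF p(2), of f True] piA_lift[OF p(2)] p(1) by (simp add: PiMap_def Rf_def)
      ultimately show "p \<in> PiMap N ` S" by (metis image_eqI)
    qed
    moreover have "1 - y \<in> II" using h(2) by simp
    ultimately show ?thesis using interior_char pn h False by (simp add: PiMap_def Rf_def) blast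
  qed
qed

lemma FF_inj:
  assumes d: "\<forall>i\<in>{1..N}. C1_diffeo_onto_image (f i)"
  shows "inj_on (FF f) (SigmaN N \<times> II)"
proof (rule inj_onI)
  fix p q assume p: "p \<in> SigmaN N \<times> II" and q: "q \<in> SigmaN N \<times> II" and e: "FF f p = FF f q"
  obtain \<xi> x \<zeta> y where pq: "p = (\<xi>,x)" "q = (\<zeta>,y)" by fastforce
  have "shift \<xi> = shift \<zeta>" using e pq by (simp add: FF_def)
  then have "\<xi> = \<zeta>" unfolding shift_def fun_eq_iff by (metis diff_add_cancel)
  moreover have "\<xi> 0 \<in> {1..N}" using p pq by (auto simp: SigmaN_def)
  then have "inj_on (f (\<xi> 0)) II" using d by (auto simp: C1_diffeo_onto_image_def)
  moreover have "f (\<xi> 0) x = f (\<xi> 0) y" using e pq \<open>\<xi> = \<zeta>\<close> by (simp add: FF_def)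
  ultimately show "p = q" using p q pq by (auto dest: inj_onD)
qed

lemma PiMap_range:
  "q \<in> SigmaA N f \<times> II \<Longrightarrow> PiMap N q \<in> SigmaN N \<times> II"
  using piA_in by (cases q) (auto simp: PiMap_def Rf_def)

theorem lemma3p9:
  fixes N :: nat and f :: "nat \<Rightarrow> real \<Rightarrow> real"
    and S :: "((int \<Rightarrow> nat) \<times> real) set"
  assumes diffeo: "\<forall>i\<in>{1..N}. C1_diffeo_onto_image (f i)"
  shows "(is_strip (SigmaA N f) S \<and> attracting (SigmaA N f) (GG N f) S \<longrightarrow>
            is_bistrip (SigmaN N) (PiMap N ` S) \<and> attracting (SigmaN N) (FF f) (PiMap N ` S))
       \<and> (is_strip (SigmaA N f) S \<and> repelling (SigmaA N f) (GG N f) S \<longrightarrow>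
            PiMap N ` S \<subseteq> FF f ` (SigmaN N \<times> II) \<and>
            is_bistrip (SigmaN N) (PiMap N ` S) \<and> repelling (SigmaN N) (FF f) (PiMap N ` S))"
proof (intro conjI impI)
  assume a: "is_strip (SigmaA N f) S \<and> attracting (SigmaA N f) (GG N f) S"
  then show "is_bistrip (SigmaN N) (PiMap N ` S)" using bistrip[OF diffeo] by blast
  have Ssub: "S \<subseteq> SigmaA N f \<times> UNIV" using a unfolding is_strip_def strip_def by auto
  show "attracting (SigmaN N) (FF f) (PiMap N ` S)"
    unfolding attracting_def
  proof
    fix r assume "r \<in> FF f ` PiMap N ` S"
    then obtain \<omega> x where w: "(\<omega>,x) \<in> S" "r = FF f (PiMap N (\<omega>,x))" by auto
    have "\<omega> \<in> SigmaA N f" using Ssub w(1) by auto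
    then have "r = PiMap N (GG N f (\<omega>,x))" using semiconj w(2) by metis
    moreover have "GG N f (\<omega>,x) \<in> phase_top (SigmaA N f) interior_of S"
      using a w(1) unfolding attracting_def by blast
    ultimately show "r \<in> phase_top (SigmaN N) interior_of (PiMap N ` S)"
      using interior_PiMap[OF diffeo] by (metis surj_pair)
  qed
next
  assume a: "is_strip (SigmaA N f) S \<and> repelling (SigmaA N f) (GG N f) S"
  then have R1: "S \<subseteq> GG N f ` (SigmaA N f \<times> II)"
    and R2: "inv_into (SigmaA N f \<times> II) (GG N f) ` S \<subseteq> phase_top (SigmaA N f) interior_of S"
    unfolding repelling_def by auto
  have sc: "PiMap N (GG N f q) = FF f (PiMap N q)" if "q \<in> SigmaA N f \<times> II" for q
    using that semiconj by (cases q) auto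
  show sub: "PiMap N ` S \<subseteq> FF f ` (SigmaN N \<times> II)"
  proof
    fix r assume "r \<in> PiMap N ` S"
    then obtain p where p: "p \<in> S" "r = PiMap N p" by blast
    then obtain q where q: "q \<in> SigmaA N f \<times> II" "p = GG N f q" using R1 by blast
    then have "r = FF f (PiMap N q)" using p sc by simp
    then show "r \<in> FF f ` (SigmaN N \<times> II)" using PiMap_range[OF q(1)] image_eqI by metis
  qed
  show "is_bistrip (SigmaN N) (PiMap N ` S)" using a bistrip[OF diffeo] by blast
  show "repelling (SigmaN N) (FF f) (PiMap N ` S)"
    unfolding repelling_def
  proof (intro conjI sub)
    show "inv_into (SigmaN N \<times> II) (FF f) ` PiMap N ` S \<subseteq> phase_top (SigmaN N) interior_of (PiMap N ` S)"
    proof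
      fix r assume "r \<in> inv_into (SigmaN N \<times> II) (FF f) ` PiMap N ` S"
      then obtain p where p: "p \<in> S" "r = inv_into (SigmaN N \<times> II) (FF f) (PiMap N p)" by blast
      define q where "q = inv_into (SigmaA N f \<times> II) (GG N f) p"
      have qin: "q \<in> SigmaA N f \<times> II" unfolding q_def using R1 p(1) by (blast intro: inv_into_into)
      have gq: "GG N f q = p" unfolding q_def using R1 p(1) by (blast intro: f_inv_into_f)
      have "FF f (PiMap N q) = PiMap N p" using sc[OF qin] gq by simp
      then have "r = PiMap N q"
        using p(2) inv_into_f_f[OF FF_inj[OF diffeo] PiMap_range[OF qin]] by simp
      moreover have "q \<in> phase_top (SigmaA N f) interior_of S" using R2 p(1) q_def by blast
      ultimately show "r \<in> phase_top (SigmaN N) interior_of (PiMap N ` S)"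
        using interior_PiMap[OF diffeo] by (metis surj_pair)
    qed
  qed
qed

end
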